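(* Let $n\ge 3$ and $w(A,B)\in\mathbb F_2=\langle A,B\rangle$. For every $1\le i\le n-2$, $$\Big[Q_n^i,\big[M_n^{i+1},P_n^{i+2}\big]\Big]\le\operatorname{Ker}(\Theta_n^w),$$ where $Q_n^i=\langle t_{i,i+1},\,e_{i,i+1,i+2}\rangle$, $M_n^{i+1}=\langle t_{i+1,i+2},\,d_{i,i+1,i+2}\rangle$, $P_n^{i+2}=\langle t_{i,i+2}\rangle$ are subgroups of $FVB_n$, and for subgroups $H,K$, $[H,K]$ denotes the subgroup generated by all commutators $[h,k]=hkh^{-1}k^{-1}$, $h\in H$, $k\in K$.
   Context: For $n\ge 2$, the flat virtual braid group $FVB_n$ is the group with generators $\sigma_1,\dots,\sigma_{n-1},\rho_1,\dots,\rho_{n-1}$ and defining relations: $\sigma_i^2=1$, $\rho_i^2=1$ for $1\le i\le n-1$; $\sigma_i\sigma_{i+1}\sigma_i=\sigma_{i+1}\sigma_i\sigma_{i+1}$, $\rho_i\rho_{i+1}\rho_i=\rho_{i+1}\rho_i\rho_{i+1}$ and $\rho_i\rho_{i+1}\sigma_i=\sigma_{i+1}\rho_i\rho_{i+1}$ for $1\le i\le n-2$; $\sigma_i\sigma_j=\sigma_j\sigma_i$, $\rho_i\rho_j=\rho_j\rho_i$ and $\rho_i\sigma_j=\sigma_j\rho_i$ for $|i-j|\ge 2$. $\mathbb F_{2n}$ is the free group on $x_1,\dots,x_n,y_1,\dots,y_n$; automorphisms compose left to right, $(\varphi\psi)(f)=\psi(\varphi(f))$, so that $\Theta(\beta\gamma)(f)=\Theta(\gamma)(\Theta(\beta)(f))$;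 generators not mentioned are fixed. For $w(A,B)\in\mathbb F_2$, $\Theta_n^w\colon FVB_n\to\mathrm{Aut}(\mathbb F_{2n})$ is the homomorphism given by $\Theta_n^w(\sigma_i): x_i\mapsto x_{i+1}w(y_i,y_{i+1}),\ x_{i+1}\mapsto x_i w(y_i,y_{i+1})^{-1}$ and $\Theta_n^w(\rho_i): x_i\mapsto x_{i+1},\ x_{i+1}\mapsto x_i,\ y_i\mapsto y_{i+1},\ y_{i+1}\mapsto y_i$. In $FVB_n$ define $\lambda_{i,i+1}=\rho_i\sigma_i$ for $1\le i\le n-1$ and $\lambda_{i,j}=\rho_{j-1}\rho_{j-2}\cdots\rho_{i+1}\,\lambda_{i,i+1}\,\rho_{i+1}\cdots\rho_{j-2}\rho_{j-1}$ for $j-i\ge 2$. Define $t_{i,j}=\lambda_{i,j}^2$ ($1\le i<j\le n$), $d_{i,j,k}=\lambda_{j,k}^{-1}\lambda_{i,j}^{-1}\lambda_{j,k}\lambda_{i,k}$ and $e_{i,j,k}=\lambda_{j,k}^{-1}\lambda_{i,j}^{-1}\lambda_{i,k}\lambda_{i,j}$ ($1\le i<j<k\le n$). *)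

theory Defs
  imports "HOL-Algebra.Algebra"
begin

text \<open>A word over an alphabet 'a is a list of signed letters; (True, x) is x, (False, x) is x^-1.\<close>
type_synonym 'a fword = "(bool \<times> 'a) list"

fun fg_push :: "bool \<times> 'a \<Rightarrow> 'a fword \<Rightarrow> 'a fword" where
  "fg_push a [] = [a]"
| "fg_push a (b # bs) = (if fst a \<noteq> fst b \<and> snd a = snd b then bs else a # b # bs)"

definition fg_reduce :: "'a fword \<Rightarrow> 'a fword" where
  "fg_reduce u = foldr fg_push u []"

definition fg_inv :: "'a fword \<Rightarrow> 'a fword" where
  "fg_inv u = rev (map (\<lambda>(b, x). (\<not> b, x)) u)"

definition fg_subst :: "('a \<Rightarrow> 'b fword) \<Rightarrow> 'a fword \<Rightarrow> 'b fword" where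
  "fg_subst phi u = fg_reduce (concat (map (\<lambda>(b, x). if b then phi x else fg_inv (phi x)) u))"

text \<open>Generators of F_2 = <A,B> and of F_2n = <x_1..x_n, y_1..y_n>.\<close>
datatype ab = A | B
datatype fletter = FX nat | FY nat

fun fl_idx :: "fletter \<Rightarrow> nat" where
  "fl_idx (FX k) = k" | "fl_idx (FY k) = k"

datatype fvb_gen = Sig nat | Rho nat

fun gen_idx :: "fvb_gen \<Rightarrow> nat" where
  "gen_idx (Sig k) = k" | "gen_idx (Rho k) = k"

definition fvb_words :: "nat \<Rightarrow> fvb_gen list set" where
  "fvb_words n = {u. \<forall>g \<in> set u. 1 \<le> gen_idx g \<and> gen_idx g \<le> n - 1}"

definition fvb_rels :: "nat \<Rightarrow> (fvb_gen list \<times> fvb_gen list) set" where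
  "fvb_rels n =
     {([Sig i, Sig i], []) | i. 1 \<le> i \<and> i \<le> n - 1}
   \<union> {([Rho i, Rho i], []) | i. 1 \<le> i \<and> i \<le> n - 1}
   \<union> {([Sig i, Sig (i+1), Sig i], [Sig (i+1), Sig i, Sig (i+1)]) | i. 1 \<le> i \<and> i \<le> n - 2}
   \<union> {([Rho i, Rho (i+1), Rho i], [Rho (i+1), Rho i, Rho (i+1)]) | i. 1 \<le> i \<and> i \<le> n - 2}
   \<union> {([Rho i, Rho (i+1), Sig i], [Sig (i+1), Rho i, Rho (i+1)]) | i. 1 \<le> i \<and> i \<le> n - 2}
   \<union> {([Sig i, Sig j], [Sig j, Sig i]) | i j. 1 \<le> i \<and> i \<le> n - 1 \<and> 1 \<le> j \<and> j \<le> n - 1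
         \<and> (i + 2 \<le> j \<or> j + 2 \<le> i)}
   \<union> {([Rho i, Rho j], [Rho j, Rho i]) | i j. 1 \<le> i \<and> i \<le> n - 1 \<and> 1 \<le> j \<and> j \<le> n - 1
         \<and> (i + 2 \<le> j \<or> j + 2 \<le> i)}
   \<union> {([Rho i, Sig j], [Sig j, Rho i]) | i j. 1 \<le> i \<and> i \<le> n - 1 \<and> 1 \<le> j \<and> j \<le> n - 1
         \<and> (i + 2 \<le> j \<or> j + 2 \<le> i)}"

text \<open>The congruence on words generated by the relations.  Since every generator is an
  involution, FVB_n is the quotient of the free monoid on the generators by this congruence.\<close>
inductive fvb_eq :: "nat \<Rightarrow> fvb_gen list \<Rightarrow> fvb_gen list \<Rightarrow> bool" for n where
  rel: "\<lbrakk>(l, r) \<in> fvb_rels n; a \<in> fvb_words n; b \<in> fvb_words n\<rbrakk>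
          \<Longrightarrow> fvb_eq n (a @ l @ b) (a @ r @ b)"
| refl: "u \<in> fvb_words n \<Longrightarrow> fvb_eq n u u"
| sym: "fvb_eq n u v \<Longrightarrow> fvb_eq n v u"
| trans: "\<lbrakk>fvb_eq n u v; fvb_eq n v w\<rbrakk> \<Longrightarrow> fvb_eq n u w"

definition fvb_class :: "nat \<Rightarrow> fvb_gen list \<Rightarrow> fvb_gen list set" where
  "fvb_class n u = {v. fvb_eq n u v}"

definition FVB :: "nat \<Rightarrow> fvb_gen list set monoid" where
  "FVB n = \<lparr> carrier = fvb_class n ` fvb_words n,
             monoid.mult = (\<lambda>C D. {v. \<exists>u1 \<in> C. \<exists>u2 \<in> D. fvb_eq n (u1 @ u2) v}),
             one = fvb_class n [] \<rparr>"

definition fvb_sigma :: "nat \<Rightarrow> nat \<Rightarrow> fvb_gen list set" where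
  "fvb_sigma n i = fvb_class n [Sig i]"

definition fvb_rho :: "nat \<Rightarrow> nat \<Rightarrow> fvb_gen list set" where
  "fvb_rho n i = fvb_class n [Rho i]"

text \<open>lambda_{i,i+1} = rho_i sigma_i and, for j - i >= 2,
  lambda_{i,j} = rho_{j-1} ... rho_{i+1} lambda_{i,i+1} rho_{i+1} ... rho_{j-1},
  i.e. lambda_{i,j} = rho_{j-1} lambda_{i,j-1} rho_{j-1}.  (Only used for i < j.)\<close>
fun fvb_lambda :: "nat \<Rightarrow> nat \<Rightarrow> nat \<Rightarrow> fvb_gen list set" where
  "fvb_lambda n i 0 = \<one>\<^bsub>FVB n\<^esub>"
| "fvb_lambda n i (Suc j) =
     (if Suc j \<le> Suc i then fvb_rho n i \<otimes>\<^bsub>FVB n\<^esub> fvb_sigma n i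
      else fvb_rho n j \<otimes>\<^bsub>FVB n\<^esub> fvb_lambda n i j \<otimes>\<^bsub>FVB n\<^esub> fvb_rho n j)"

definition fvb_t :: "nat \<Rightarrow> nat \<Rightarrow> nat \<Rightarrow> fvb_gen list set" where
  "fvb_t n i j = fvb_lambda n i j \<otimes>\<^bsub>FVB n\<^esub> fvb_lambda n i j"

definition fvb_d :: "nat \<Rightarrow> nat \<Rightarrow> nat \<Rightarrow> nat \<Rightarrow> fvb_gen list set" where
  "fvb_d n i j k = inv\<^bsub>FVB n\<^esub> (fvb_lambda n j k) \<otimes>\<^bsub>FVB n\<^esub> inv\<^bsub>FVB n\<^esub> (fvb_lambda n i j)
      \<otimes>\<^bsub>FVB n\<^esub> fvb_lambda n j k \<otimes>\<^bsub>FVB n\<^esub> fvb_lambda n i k"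

definition fvb_e :: "nat \<Rightarrow> nat \<Rightarrow> nat \<Rightarrow> nat \<Rightarrow> fvb_gen list set" where
  "fvb_e n i j k = inv\<^bsub>FVB n\<^esub> (fvb_lambda n j k) \<otimes>\<^bsub>FVB n\<^esub> inv\<^bsub>FVB n\<^esub> (fvb_lambda n i j)
      \<otimes>\<^bsub>FVB n\<^esub> fvb_lambda n i k \<otimes>\<^bsub>FVB n\<^esub> fvb_lambda n i j"

definition w_at :: "ab fword \<Rightarrow> nat \<Rightarrow> fletter fword" where
  "w_at w i = fg_subst (\<lambda>c. case c of A \<Rightarrow> [(True, FY i)] | B \<Rightarrow> [(True, FY (i+1))]) w"

fun theta_gen :: "ab fword \<Rightarrow> fvb_gen \<Rightarrow> fletter \<Rightarrow> fletter fword" where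
  "theta_gen w (Sig i) l =
     (if l = FX i then (True, FX (i+1)) # w_at w i
      else if l = FX (i+1) then (True, FX i) # fg_inv (w_at w i)
      else [(True, l)])"
| "theta_gen w (Rho i) l =
     (if l = FX i then [(True, FX (i+1))]
      else if l = FX (i+1) then [(True, FX i)]
      else if l = FY i then [(True, FY (i+1))]
      else if l = FY (i+1) then [(True, FY i)]
      else [(True, l)])"

text \<open>Theta on words, with the convention Theta(beta gamma)(f) = Theta(gamma)(Theta(beta)(f)).
  An automorphism is represented by the (reduced) images of the free generators.\<close>
fun theta_word :: "ab fword \<Rightarrow> fvb_gen list \<Rightarrow> fletter \<Rightarrow> fletter fword" where
  "theta_word w [] l = [(True, l)]"
| "theta_word w (g # u) l = fg_subst (theta_word w u) (theta_gen w g l)"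

definition Theta :: "ab fword \<Rightarrow> fvb_gen list set \<Rightarrow> fletter \<Rightarrow> fletter fword" where
  "Theta w C = theta_word w (SOME u. u \<in> C)"

definition Theta_ker :: "nat \<Rightarrow> ab fword \<Rightarrow> fvb_gen list set set" where
  "Theta_ker n w = {C \<in> carrier (FVB n). \<forall>l. 1 \<le> fl_idx l \<and> fl_idx l \<le> n \<longrightarrow> Theta w C l = [(True, l)]}"

definition comm_sub :: "('a, 'b) monoid_scheme \<Rightarrow> 'a set \<Rightarrow> 'a set \<Rightarrow> 'a set" where
  "comm_sub G H K = generate G {h \<otimes>\<^bsub>G\<^esub> k \<otimes>\<^bsub>G\<^esub> inv\<^bsub>G\<^esub> h \<otimes>\<^bsub>G\<^esub> inv\<^bsub>G\<^esub> k | h k. h \<in> H \<and> k \<in> K}"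

end

theory Submission
  imports Defs
begin


fun red :: "'a fword \<Rightarrow> bool" where
  "red [] = True"
| "red [a] = True"
| "red (a # b # r) = (\<not> (fst a \<noteq> fst b \<and> snd a = snd b) \<and> red (b # r))"

definition flp :: "bool \<times> 'a \<Rightarrow> bool \<times> 'a" where "flp a = (\<not> fst a, snd a)"

lemma red_tl: "red (a # r) \<Longrightarrow> red r"
  by (cases r) auto

lemma red_push: "red v \<Longrightarrow> red (fg_push a v)"
proof (cases v)
  case Nil then show ?thesis by simp
next
  case (Cons b bs)
  assume "red v"
  then show ?thesis using Cons by (auto intro: red_tl)
qed

lemma red_foldr: "red v \<Longrightarrow> red (foldr fg_push u v)"
  by (induction u) (auto intro: red_push)

lemma red_reduce[simp]: "red (fg_reduce u)"
  unfolding fg_reduce_def by (rule red_foldr) simp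

lemma push_cancel: "red v \<Longrightarrow> fg_push (flp a) (fg_push a v) = v"
proof (cases v)
  case Nil then show ?thesis by (simp add: flp_def)
next
  case (Cons b bs)
  assume r: "red v"
  show ?thesis
  proof (cases "fst a \<noteq> fst b \<and> snd a = snd b")
    case True
    then have "flp a = b" by (cases a, cases b) (auto simp: flp_def)
    then show ?thesis using Cons True r
      by (cases bs) (auto simp: flp_def)
  next
    case False
    then show ?thesis using Cons by (auto simp: flp_def)
  qed
qed

lemma flp_flp[simp]: "flp (flp a) = a" by (simp add: flp_def)

lemma reduce_red: "red u \<Longrightarrow> fg_reduce u = u"
proof (induction u)
  case Nil then show ?case by (simp add: fg_reduce_def)
next
  case (Cons a u)
  then have "fg_reduce u = u" using red_tl by blast
  then show ?case using Cons.prems by (cases u) (auto simp: fg_reduce_def)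
qed

lemma fg_inv_Nil[simp]: "fg_inv [] = []" by (simp add: fg_inv_def)
lemma fg_inv_Cons: "fg_inv (a # u) = fg_inv u @ [flp a]"
  by (cases a) (simp add: fg_inv_def flp_def)
lemma fg_inv_append[simp]: "fg_inv (u @ v) = fg_inv v @ fg_inv u"
  by (simp add: fg_inv_def)
lemma fg_inv_inv[simp]: "fg_inv (fg_inv u) = u"
  by (induction u) (auto simp: fg_inv_Cons flp_def)

lemma foldr_cancel: "red v \<Longrightarrow> foldr fg_push (u @ fg_inv u) v = v"
proof (induction u arbitrary: v)
  case Nil then show ?case by simp
next
  case (Cons a u)
  have "foldr fg_push ((a # u) @ fg_inv (a # u)) v
      = fg_push a (foldr fg_push (u @ fg_inv u) (fg_push (flp a) v))"
    by (simp add: fg_inv_Cons)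
  also have "\<dots> = fg_push a (fg_push (flp a) v)"
    using Cons by (simp add: red_push)
  also have "\<dots> = v" using push_cancel[of v "flp a"] Cons.prems by simp
  finally show ?case .
qed

lemma foldr_cancel': "red v \<Longrightarrow> foldr fg_push (fg_inv u @ u) v = v"
  using foldr_cancel[of v "fg_inv u"] by simp

lemma foldr_push_push: "red r \<Longrightarrow> red z \<Longrightarrow>
   foldr fg_push (fg_push a r) z = fg_push a (foldr fg_push r z)"
proof (cases r)
  case Nil then show ?thesis by simp
next
  case (Cons b r')
  assume rr: "red r" and rz: "red z"
  show ?thesis
  proof (cases "fst a \<noteq> fst b \<and> snd a = snd b")
    case True
    then have "a = flp b" by (cases a, cases b) (auto simp: flp_def)
    then show ?thesis using Cons True push_cancel[of "foldr fg_push r' z" b] rz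
      by (simp add: red_foldr)
  next
    case False then show ?thesis using Cons by auto
  qed
qed

lemma foldr_reduce: "red z \<Longrightarrow> foldr fg_push (fg_reduce u) z = foldr fg_push u z"
proof (induction u)
  case Nil then show ?case by (simp add: fg_reduce_def)
next
  case (Cons a u)
  have "fg_reduce (a # u) = fg_push a (fg_reduce u)" by (simp add: fg_reduce_def)
  then show ?case using Cons foldr_push_push[of "fg_reduce u" z a] by simp
qed

lemma reduce_append: "fg_reduce (u @ v) = foldr fg_push u (fg_reduce v)"
  by (simp add: fg_reduce_def)

lemma reduce_reduce[simp]: "fg_reduce (fg_reduce u) = fg_reduce u"
  by (simp add: reduce_red)

lemma reduce_left[simp]: "fg_reduce (fg_reduce u @ v) = fg_reduce (u @ v)"
  by (simp add: reduce_append foldr_reduce)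

lemma reduce_right[simp]: "fg_reduce (u @ fg_reduce v) = fg_reduce (u @ v)"
  by (simp add: reduce_append)

lemma reduce_cancel[simp]: "fg_reduce (u @ fg_inv u @ v) = fg_reduce v"
  using foldr_cancel[of "fg_reduce v" u] by (simp add: reduce_append[symmetric])

lemma reduce_cancel'[simp]: "fg_reduce (fg_inv u @ u @ v) = fg_reduce v"
  using reduce_cancel[of "fg_inv u" v] by simp

lemma reduce_cancel0[simp]: "fg_reduce (u @ fg_inv u) = []"
  using reduce_cancel[of u "[]"] by (simp add: fg_reduce_def)

lemma reduce_cancel0'[simp]: "fg_reduce (fg_inv u @ u) = []"
  using reduce_cancel0[of "fg_inv u"] by simp

lemma reduce_Nil[simp]: "fg_reduce [] = []" by (simp add: fg_reduce_def)

lemma red_snoc_aux: "red (u @ [b]) \<Longrightarrow> \<not> (fst b \<noteq> fst c \<and> snd b = snd c) \<Longrightarrow> red (u @ [b, c])"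
proof (induction u)
  case Nil then show ?case by simp
next
  case (Cons a u)
  then show ?case by (cases u) auto
qed

lemma red_inv: "red u \<Longrightarrow> red (fg_inv u)"
proof (induction u rule: red.induct)
  case 1 then show ?case by simp
next
  case (2 a) then show ?case by (simp add: fg_inv_def)
next
  case (3 a b r)
  have "fg_inv (a # b # r) = fg_inv r @ [flp b, flp a]" by (simp add: fg_inv_Cons)
  moreover have "red (fg_inv r @ [flp b])" using 3 by (simp add: fg_inv_Cons)
  moreover have "\<not> (fst (flp b) \<noteq> fst (flp a) \<and> snd (flp b) = snd (flp a))"
    using 3(2) by (auto simp: flp_def)
  ultimately show ?case
    using red_snoc_aux by (metis append.assoc append_Cons append_Nil)
qed

lemma reduce_inv: "fg_reduce (fg_inv z) = fg_inv (fg_reduce z)"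
proof -
  let ?r = "fg_reduce z"
  have "fg_reduce (z @ fg_inv ?r) = []"
    using reduce_left[of z "fg_inv ?r"] by simp
  then have "fg_reduce (fg_inv z) = fg_reduce (fg_inv z @ fg_reduce (z @ fg_inv ?r))" by simp
  also have "\<dots> = fg_reduce (fg_inv ?r)" by simp
  also have "\<dots> = fg_inv ?r" by (simp add: reduce_red red_inv)
  finally show ?thesis .
qed

definition img :: "('a \<Rightarrow> 'b fword) \<Rightarrow> bool \<times> 'a \<Rightarrow> 'b fword" where
  "img f a = (if fst a then f (snd a) else fg_inv (f (snd a)))"

lemma subst_img: "fg_subst f u = fg_reduce (concat (map (img f) u))"
  unfolding fg_subst_def img_def by (rule arg_cong[where f=fg_reduce], rule arg_cong[where f=concat]) (auto)

lemma img_flp: "img f (flp a) = fg_inv (img f a)"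
  by (simp add: img_def flp_def)

lemma subst_Nil[simp]: "fg_subst f [] = []" by (simp add: subst_img)

lemma subst_append: "fg_subst f (x @ y) = fg_reduce (fg_subst f x @ fg_subst f y)"
  by (simp add: subst_img)

lemma concat_inv: "concat (map (img f) (fg_inv u)) = fg_inv (concat (map (img f) u))"
  by (induction u) (simp_all add: fg_inv_Cons img_flp)

lemma subst_inv: "fg_subst f (fg_inv u) = fg_inv (fg_subst f u)"
  by (simp add: subst_img concat_inv reduce_inv)

lemma subst_Cons: "fg_subst f (a # u) = fg_reduce (img f a @ fg_subst f u)"
  by (simp add: subst_img)

lemma subst_push: "fg_subst f (fg_push a r) = fg_subst f (a # r)"
proof (cases r)
  case Nil then show ?thesis by simp
next
  case (Cons b r')
  show ?thesis
  proof (cases "fst a \<noteq> fst b \<and> snd a = snd b")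
    case True
    then have "b = flp a" by (cases a, cases b) (auto simp: flp_def)
    then show ?thesis using Cons True
      by (simp add: subst_img img_flp)
  next
    case False then show ?thesis using Cons by auto
  qed
qed

lemma subst_reduce[simp]: "fg_subst f (fg_reduce u) = fg_subst f u"
proof (induction u)
  case Nil then show ?case by simp
next
  case (Cons a u)
  have "fg_reduce (a # u) = fg_push a (fg_reduce u)" by (simp add: fg_reduce_def)
  then have "fg_subst f (fg_reduce (a # u)) = fg_subst f (a # fg_reduce u)"
    by (simp add: subst_push)
  also have "\<dots> = fg_reduce (img f a @ fg_subst f (fg_reduce u))" by (rule subst_Cons)
  also have "\<dots> = fg_subst f (a # u)" using Cons by (simp add: subst_Cons)
  finally show ?case .
qed

lemma subst_subst: "fg_subst f (fg_subst g u) = fg_subst (\<lambda>x. fg_subst f (g x)) u"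
proof -
  have "fg_subst f (concat (map (img g) u)) = fg_subst (\<lambda>x. fg_subst f (g x)) u"
  proof (induction u)
    case Nil then show ?case by simp
  next
    case (Cons a u)
    have "img (\<lambda>x. fg_subst f (g x)) a = fg_subst f (img g a)"
      by (simp add: img_def subst_inv)
    then show ?case using Cons by (simp add: subst_append subst_Cons)
  qed
  then show ?thesis by (simp only: subst_img[of g u] subst_reduce)
qed

lemma red_subst[simp]: "red (fg_subst f u)" by (simp add: fg_subst_def)

lemma subst_cong: "(\<And>a. a \<in> set u \<Longrightarrow> f (snd a) = g (snd a)) \<Longrightarrow> fg_subst f u = fg_subst g u"
  unfolding subst_img img_def by (rule arg_cong[where f=fg_reduce], rule arg_cong[where f=concat]) auto

lemma set_push: "set (fg_push a v) \<subseteq> insert a (set v)"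
  by (cases v) auto

lemma set_foldr: "set (foldr fg_push u v) \<subseteq> set u \<union> set v"
  by (induction u) (use set_push in fastforce)+

lemma set_reduce: "set (fg_reduce u) \<subseteq> set u"
  unfolding fg_reduce_def using set_foldr[of u "[]"] by simp

lemma set_inv: "set (fg_inv u) = flp ` set u"
  unfolding fg_inv_def flp_def by (auto simp: image_iff) (metis case_prod_conv fst_conv snd_conv)+



definition fmul :: "'a fword \<Rightarrow> 'a fword \<Rightarrow> 'a fword" where
  "fmul x y = fg_reduce (x @ y)"

fun isY :: "fletter \<Rightarrow> bool" where "isY (FY _) = True" | "isY (FX _) = False"

definition yonly :: "fletter fword \<Rightarrow> bool" where
  "yonly u = (\<forall>a\<in>set u. isY (snd a))"

fun rmap :: "(nat \<Rightarrow> nat) \<Rightarrow> fletter \<Rightarrow> fletter fword" where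
  "rmap \<beta> (FX k) = [(True, FX k)]" | "rmap \<beta> (FY k) = [(True, FY (\<beta> k))]"

definition ren :: "(nat \<Rightarrow> nat) \<Rightarrow> fletter fword \<Rightarrow> fletter fword" where
  "ren \<beta> u = fg_subst (rmap \<beta>) u"

definition Wd :: "ab fword \<Rightarrow> nat \<Rightarrow> nat \<Rightarrow> fletter fword" where
  "Wd w p q = fg_subst (\<lambda>c. case c of A \<Rightarrow> [(True, FY p)] | B \<Rightarrow> [(True, FY q)]) w"

datatype tr = Tr (ta: "nat \<Rightarrow> nat") (tb: "nat \<Rightarrow> nat") (tu: "nat \<Rightarrow> fletter fword")

fun gm :: "tr \<Rightarrow> fletter \<Rightarrow> fletter fword" where
  "gm t (FX k) = (True, FX (ta t k)) # tu t k"
| "gm t (FY k) = [(True, FY (tb t k))]"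

definition tcomp :: "tr \<Rightarrow> tr \<Rightarrow> tr" where
  "tcomp t t' = Tr (ta t' \<circ> ta t) (tb t' \<circ> tb t) (\<lambda>k. fmul (tu t' (ta t k)) (ren (tb t') (tu t k)))"

definition valid :: "tr \<Rightarrow> bool" where
  "valid t = (\<forall>k. red (tu t k) \<and> yonly (tu t k))"

definition idt :: tr where "idt = Tr id id (\<lambda>_. [])"

lemma reduce_red'[simp]: "red u \<Longrightarrow> fg_reduce u = u" by (rule reduce_red)

lemma red_fmul[simp]: "red (fmul x y)" by (simp add: fmul_def)
lemma fmul_assoc[simp]: "fmul (fmul x y) z = fmul x (fmul y z)"
  unfolding fmul_def by (metis append.assoc reduce_left reduce_right)
lemma fmul_Nil1[simp]: "fmul [] y = fg_reduce y" by (simp add: fmul_def)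
lemma fmul_Nil2[simp]: "fmul x [] = fg_reduce x" by (simp add: fmul_def)
lemma fmul_cancel1[simp]: "fmul x (fmul (fg_inv x) y) = fg_reduce y"
  by (simp add: fmul_def)
lemma fmul_cancel2[simp]: "fmul (fg_inv x) (fmul x y) = fg_reduce y"
  by (simp add: fmul_def)
lemma fmul_cancel3[simp]: "fmul x (fg_inv x) = []" by (simp add: fmul_def)
lemma fmul_cancel4[simp]: "fmul (fg_inv x) x = []" by (simp add: fmul_def)
lemma fmul_red1[simp]: "fmul (fg_reduce x) y = fmul x y" by (simp add: fmul_def)
lemma fmul_red2[simp]: "fmul x (fg_reduce y) = fmul x y" by (simp add: fmul_def)
lemma inv_fmul[simp]: "fg_inv (fmul x y) = fmul (fg_inv y) (fg_inv x)"
  by (simp add: fmul_def reduce_inv[symmetric])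
lemma red_inv_iff[simp]: "red (fg_inv u) = red u"
  using red_inv fg_inv_inv by metis

lemma yonly_Nil[simp]: "yonly []" by (simp add: yonly_def)
lemma yonly_append[simp]: "yonly (u @ v) = (yonly u \<and> yonly v)" by (auto simp: yonly_def)
lemma yonly_inv[simp]: "yonly (fg_inv u) = yonly u" by (auto simp: yonly_def set_inv flp_def)
lemma yonly_reduce[simp]: "yonly u \<Longrightarrow> yonly (fg_reduce u)"
  using set_reduce by (fastforce simp: yonly_def)
lemma yonly_fmul[simp]: "yonly x \<Longrightarrow> yonly y \<Longrightarrow> yonly (fmul x y)" by (simp add: fmul_def)
lemma yonly_subst: "(\<And>a. a \<in> set u \<Longrightarrow> yonly (f (snd a))) \<Longrightarrow> yonly (fg_subst f u)"
proof -
  assume h: "\<And>a. a \<in> set u \<Longrightarrow> yonly (f (snd a))"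
  have "yonly (concat (map (img f) u))" using h
    by (induction u) (auto simp: img_def)
  then show ?thesis by (simp add: subst_img)
qed
lemma yonly_Wd[simp]: "yonly (Wd w p q)"
  unfolding Wd_def by (rule yonly_subst) (auto simp: yonly_def split: ab.split)
lemma red_Wd[simp]: "red (Wd w p q)" by (simp add: Wd_def)
lemma yonly_ren[simp]: "yonly u \<Longrightarrow> yonly (ren \<beta> u)"
  unfolding ren_def
  by (rule yonly_subst) (auto simp: yonly_def elim!: isY.elims)
lemma red_ren[simp]: "red (ren \<beta> u)" by (simp add: ren_def)

lemma subst_single[simp]: "fg_subst f [(True, x)] = fg_reduce (f x)"
  by (simp add: subst_img img_def)

lemma ren_Nil[simp]: "ren \<beta> [] = []" by (simp add: ren_def)
lemma ren_fmul[simp]: "ren \<beta> (fmul x y) = fmul (ren \<beta> x) (ren \<beta> y)"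
  by (simp add: ren_def fmul_def subst_append)
lemma ren_inv[simp]: "ren \<beta> (fg_inv x) = fg_inv (ren \<beta> x)"
  by (simp add: ren_def subst_inv)
lemma ren_reduce[simp]: "ren \<beta> (fg_reduce x) = ren \<beta> x"
  by (simp add: ren_def)
lemma ren_ren[simp]: "ren \<beta> (ren \<gamma> u) = ren (\<beta> \<circ> \<gamma>) u"
  unfolding ren_def subst_subst
  by (rule subst_cong) (case_tac "snd a", auto)
lemma ren_Wd[simp]: "ren \<beta> (Wd w p q) = Wd w (\<beta> p) (\<beta> q)"
  unfolding ren_def Wd_def subst_subst
  by (rule subst_cong) (auto split: ab.split)
lemma subst_id: "fg_subst (\<lambda>l. [(True, l)]) u = fg_reduce u"
proof -
  have "concat (map (img (\<lambda>l. [(True, l)])) u) = u"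
    by (induction u) (auto simp: img_def fg_inv_def)
  then show ?thesis by (simp add: subst_img)
qed
lemma ren_id[simp]: "ren id u = fg_reduce u"
proof -
  have "fg_subst (rmap id) u = fg_subst (\<lambda>l. [(True, l)]) u"
    by (rule subst_cong) (case_tac "snd a", auto)
  then show ?thesis by (simp add: ren_def subst_id)
qed
lemma ren_id'[simp]: "ren (\<lambda>x. x) u = fg_reduce u"
  using ren_id unfolding id_def .

lemma push_FX: "yonly r \<Longrightarrow> fg_push (True, FX m) r = (True, FX m) # r"
  by (cases r) (auto simp: yonly_def elim: isY.elims)

lemma subst_gm_yonly: "yonly u \<Longrightarrow> fg_subst (gm t) u = ren (tb t) u"
  unfolding ren_def
  by (rule subst_cong) (auto simp: yonly_def elim!: isY.elims)

lemma gm_comp: "valid t \<Longrightarrow> valid t' \<Longrightarrow> fg_subst (gm t') (gm t l) = gm (tcomp t t') l"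
proof (cases l)
  case (FX k)
  assume v: "valid t" "valid t'"
  have y: "yonly (tu t k)" "yonly (tu t' (ta t k))" using v by (auto simp: valid_def)
  have "fg_subst (gm t') (gm t l) = fg_reduce (((True, FX (ta t' (ta t k))) # tu t' (ta t k)) @ ren (tb t') (tu t k))"
    using FX y by (simp add: subst_Cons img_def subst_gm_yonly)
  also have "\<dots> = fg_push (True, FX (ta t' (ta t k))) (fmul (tu t' (ta t k)) (ren (tb t') (tu t k)))"
    by (simp add: fmul_def fg_reduce_def)
  also have "\<dots> = gm (tcomp t t') l"
    using FX y by (simp add: push_FX tcomp_def)
  finally show ?thesis .
next
  case (FY k) then show ?thesis by (simp add: tcomp_def)
qed

lemma valid_comp[simp]: "valid t \<Longrightarrow> valid t' \<Longrightarrow> valid (tcomp t t')"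
  by (auto simp: valid_def tcomp_def)

lemma valid_idt[simp]: "valid idt" by (simp add: valid_def idt_def)

lemma comp_assoc: "tcomp (tcomp t t') t'' = tcomp t (tcomp t' t'')"
  by (simp add: tcomp_def o_def)

lemma comp_idt1: "valid t \<Longrightarrow> tcomp idt t = t"
  by (cases t) (auto simp: tcomp_def idt_def valid_def)
lemma comp_idt2: "valid t \<Longrightarrow> tcomp t idt = t"
  by (cases t) (auto simp: tcomp_def idt_def valid_def)



definition sw :: "nat \<Rightarrow> nat \<Rightarrow> nat \<Rightarrow> nat" where
  "sw a b k = (if k = a then b else if k = b then a else k)"

fun gtr :: "ab fword \<Rightarrow> fvb_gen \<Rightarrow> tr" where
  "gtr w (Sig i) = Tr (sw i (i+1)) id
     (\<lambda>k. if k = i then Wd w i (i+1) else if k = i+1 then fg_inv (Wd w i (i+1)) else [])"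
| "gtr w (Rho i) = Tr (sw i (i+1)) (sw i (i+1)) (\<lambda>k. [])"

fun tw :: "ab fword \<Rightarrow> fvb_gen list \<Rightarrow> tr" where
  "tw w [] = idt"
| "tw w (g # u) = tcomp (gtr w g) (tw w u)"

lemma valid_gtr[simp]: "valid (gtr w g)"
  by (cases g) (auto simp: valid_def)

lemma valid_tw[simp]: "valid (tw w u)"
  by (induction u) auto

lemma theta_gen_gm: "theta_gen w g = gm (gtr w g)"
  by (cases g; rule ext; case_tac x) (auto simp: sw_def w_at_def Wd_def)

lemma theta_word_gm: "theta_word w u = gm (tw w u)"
proof (induction u)
  case Nil
  show ?case by (rule ext, case_tac x) (auto simp: idt_def)
next
  case (Cons g u)
  show ?case by (rule ext) (simp add: Cons theta_gen_gm gm_comp)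
qed

lemma tw_append: "tw w (u @ v) = tcomp (tw w u) (tw w v)"
  by (induction u) (auto simp: comp_idt1 comp_assoc)

lemma tw3: "tw w [a, b, c] = tcomp (gtr w a) (tcomp (gtr w b) (gtr w c))"
  by (simp add: comp_idt2)
lemma tw2: "tw w [a, b] = tcomp (gtr w a) (gtr w b)"
  by (simp add: comp_idt2)

lemma r1: "tw w [Sig i, Sig i] = tw w []"
  unfolding tw2 by (auto simp: tcomp_def idt_def sw_def fun_eq_iff)
lemma r2: "tw w [Rho i, Rho i] = tw w []"
  unfolding tw2 by (auto simp: tcomp_def idt_def sw_def fun_eq_iff)
lemma r3: "tw w [Sig i, Sig (i+1), Sig i] = tw w [Sig (i+1), Sig i, Sig (i+1)]"
  unfolding tw3 by (auto simp: tcomp_def idt_def sw_def fun_eq_iff)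
lemma r4: "tw w [Rho i, Rho (i+1), Rho i] = tw w [Rho (i+1), Rho i, Rho (i+1)]"
  unfolding tw3 by (auto simp: tcomp_def idt_def sw_def fun_eq_iff)
lemma r5: "tw w [Rho i, Rho (i+1), Sig i] = tw w [Sig (i+1), Rho i, Rho (i+1)]"
  unfolding tw3 by (auto simp: tcomp_def idt_def sw_def fun_eq_iff)
lemma r6: "i + 2 \<le> j \<or> j + 2 \<le> i \<Longrightarrow> tw w [Sig i, Sig j] = tw w [Sig j, Sig i]"
  unfolding tw2 by (auto simp: tcomp_def idt_def sw_def fun_eq_iff)
lemma r7: "i + 2 \<le> j \<or> j + 2 \<le> i \<Longrightarrow> tw w [Rho i, Rho j] = tw w [Rho j, Rho i]"
  unfolding tw2 by (auto simp: tcomp_def idt_def sw_def fun_eq_iff)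
lemma r8: "i + 2 \<le> j \<or> j + 2 \<le> i \<Longrightarrow> tw w [Rho i, Sig j] = tw w [Sig j, Rho i]"
  unfolding tw2 by (auto simp: tcomp_def idt_def sw_def fun_eq_iff)



definition "pure S t \<longleftrightarrow> ta t = id \<and> tb t = id \<and> (\<forall>k. k \<notin> S \<longrightarrow> tu t k = [])"

lemma ta_comp[simp]: "ta (tcomp t t') k = ta t' (ta t k)" by (simp add: tcomp_def)
lemma tb_comp[simp]: "tb (tcomp t t') k = tb t' (tb t k)" by (simp add: tcomp_def)
lemma tu_comp[simp]: "tu (tcomp t t') k = fmul (tu t' (ta t k)) (ren (tb t') (tu t k))" by (simp add: tcomp_def)
lemma ta_idt[simp]: "ta idt k = k" by (simp add: idt_def)
lemma tb_idt[simp]: "tb idt k = k" by (simp add: idt_def)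
lemma tu_idt[simp]: "tu idt k = []" by (simp add: idt_def)

lemma sw1[simp]: "sw a b a = b" by (simp add: sw_def)
lemma sw2[simp]: "sw a b b = a" by (simp add: sw_def)
lemma sw3[simp]: "k \<noteq> a \<Longrightarrow> k \<noteq> b \<Longrightarrow> sw a b k = k" by (simp add: sw_def)

lemma ta_gtr_S[simp]: "ta (gtr w (Sig i)) k = sw i (i+1) k" by simp
lemma ta_gtr_R[simp]: "ta (gtr w (Rho i)) k = sw i (i+1) k" by simp
lemma tb_gtr_S[simp]: "tb (gtr w (Sig i)) k = k" by simp
lemma tb_gtr_R[simp]: "tb (gtr w (Rho i)) k = sw i (i+1) k" by simp
lemma tu_gtr_R[simp]: "tu (gtr w (Rho i)) k = []" by simp
lemma tu_gtr_S[simp]: "tu (gtr w (Sig i)) k = (if k = i then Wd w i (i+1) else if k = i+1 then fg_inv (Wd w i (i+1)) else [])" by simp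

declare gtr.simps[simp del]
lemma tw_Cons': "tw w (g # u) = tcomp (gtr w g) (tw w u)" by (rule tw.simps(2))
declare tw.simps(2)[simp del]

lemma pure3I:
  assumes "ta t i = i \<and> tb t i = i \<and> (i \<notin> S \<longrightarrow> tu t i = [])"
    and "ta t (i+1) = i+1 \<and> tb t (i+1) = i+1 \<and> (i+1 \<notin> S \<longrightarrow> tu t (i+1) = [])"
    and "ta t (i+2) = i+2 \<and> tb t (i+2) = i+2 \<and> (i+2 \<notin> S \<longrightarrow> tu t (i+2) = [])"
    and "\<And>k. k \<noteq> i \<Longrightarrow> k \<noteq> i+1 \<Longrightarrow> k \<noteq> i+2 \<Longrightarrow> k \<noteq> Suc i \<Longrightarrow> k \<noteq> Suc (Suc i) \<Longrightarrow>
          ta t k = k \<and> tb t k = k \<and> tu t k = []"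
  shows "pure S t"
  unfolding pure_def fun_eq_iff
  using assms by (metis id_apply add_2_eq_Suc' Suc_eq_plus1)

lemma t_ab: "pure {i, i+1} (tw w [Rho i, Sig i, Rho i, Sig i])"
  by (rule pure3I[where i=i]) (simp_all add: tw_Cons')


lemma t_bc: "pure {i+1, i+2} (tw w [Rho (i+1), Sig (i+1), Rho (i+1), Sig (i+1)])"
  by (rule pure3I[where i=i]) (simp_all add: tw_Cons')

lemma t_ac: "pure {i, i+2} (tw w ([Rho (i+1), Rho i, Sig i, Rho (i+1)] @ [Rho (i+1), Rho i, Sig i, Rho (i+1)]))"
  by (rule pure3I[where i=i]) (simp_all add: tw_Cons')

lemma d_bc: "pure {i+1, i+2} (tw w (rev [Rho (i+1), Sig (i+1)] @ rev [Rho i, Sig i] @ [Rho (i+1), Sig (i+1)] @ [Rho (i+1), Rho i, Sig i, Rho (i+1)]))"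
  by (rule pure3I[where i=i]) (simp_all add: tw_Cons')

lemma e_ab: "pure {i, i+1} (tw w (rev [Rho (i+1), Sig (i+1)] @ rev [Rho i, Sig i] @ [Rho (i+1), Rho i, Sig i, Rho (i+1)] @ [Rho i, Sig i]))"
  by (rule pure3I[where i=i]) (simp_all add: tw_Cons')


lemma words_append[simp]: "u @ v \<in> fvb_words n \<longleftrightarrow> u \<in> fvb_words n \<and> v \<in> fvb_words n"
  by (auto simp: fvb_words_def)
lemma words_Nil[simp]: "[] \<in> fvb_words n" by (simp add: fvb_words_def)
lemma words_Cons[simp]: "g # u \<in> fvb_words n \<longleftrightarrow> 1 \<le> gen_idx g \<and> gen_idx g \<le> n - 1 \<and> u \<in> fvb_words n"
  by (auto simp: fvb_words_def)

lemma words_rev[simp]: "rev u \<in> fvb_words n \<longleftrightarrow> u \<in> fvb_words n"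
  by (simp add: fvb_words_def)

lemma rels_words: "(l, r) \<in> fvb_rels n \<Longrightarrow> l \<in> fvb_words n \<and> r \<in> fvb_words n"
  unfolding fvb_rels_def by auto

lemma eq_words: "fvb_eq n u v \<Longrightarrow> u \<in> fvb_words n \<and> v \<in> fvb_words n"
  by (induction rule: fvb_eq.induct) (auto dest: rels_words)

lemma eq_app_r: "fvb_eq n u u' \<Longrightarrow> v \<in> fvb_words n \<Longrightarrow> fvb_eq n (u @ v) (u' @ v)"
proof (induction rule: fvb_eq.induct)
  case (rel l r a b)
  then show ?case using fvb_eq.rel[of l r n a "b @ v"] by simp
next
  case (refl u) then show ?case by (simp add: fvb_eq.refl)
next
  case (sym u v) then show ?case by (simp add: fvb_eq.sym)
next
  case (trans u v w) then show ?case by (meson fvb_eq.trans)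
qed

lemma eq_app_l: "fvb_eq n u u' \<Longrightarrow> v \<in> fvb_words n \<Longrightarrow> fvb_eq n (v @ u) (v @ u')"
proof (induction rule: fvb_eq.induct)
  case (rel l r a b)
  then show ?case using fvb_eq.rel[of l r n "v @ a" b] by simp
next
  case (refl u) then show ?case by (simp add: fvb_eq.refl)
next
  case (sym u v) then show ?case by (simp add: fvb_eq.sym)
next
  case (trans u v w) then show ?case by (meson fvb_eq.trans)
qed

lemma eq_app: "fvb_eq n u u' \<Longrightarrow> fvb_eq n v v' \<Longrightarrow> fvb_eq n (u @ v) (u' @ v')"
  by (meson eq_app_l eq_app_r eq_words fvb_eq.trans)

lemma rel_tw: "(l, r) \<in> fvb_rels n \<Longrightarrow> tw w l = tw w r"
  unfolding fvb_rels_def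
  apply (elim UnE)
  using r1 r2 r3 r4 r5 r6 r7 r8 by auto

lemma eq_tw: "fvb_eq n u v \<Longrightarrow> tw w u = tw w v"
proof (induction rule: fvb_eq.induct)
  case (rel l r a b)
  then show ?case by (simp add: tw_append rel_tw)
qed auto

lemma class_eq: "fvb_eq n u v \<Longrightarrow> fvb_class n u = fvb_class n v"
  unfolding fvb_class_def by (blast intro: fvb_eq.sym fvb_eq.trans)

lemma class_mult: "u \<in> fvb_words n \<Longrightarrow> v \<in> fvb_words n \<Longrightarrow>
   fvb_class n u \<otimes>\<^bsub>FVB n\<^esub> fvb_class n v = fvb_class n (u @ v)"
  unfolding FVB_def fvb_class_def
  by (auto intro: fvb_eq.refl) (meson eq_app fvb_eq.sym fvb_eq.trans)

lemma carrier_FVB: "carrier (FVB n) = fvb_class n ` fvb_words n" by (simp add: FVB_def)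
lemma one_FVB: "\<one>\<^bsub>FVB n\<^esub> = fvb_class n []" by (simp add: FVB_def)

lemma rev_cancel: "u \<in> fvb_words n \<Longrightarrow> fvb_eq n (rev u @ u) []"
proof (induction u)
  case Nil then show ?case by (simp add: fvb_eq.refl)
next
  case (Cons g u)
  have gg: "([g, g], []) \<in> fvb_rels n" using Cons.prems
    by (cases g) (auto simp: fvb_rels_def)
  have "fvb_eq n (rev u @ [g, g] @ u) (rev u @ [] @ u)"
    by (rule fvb_eq.rel[OF gg]) (use Cons.prems in auto)
  then show ?case using Cons by (auto intro: fvb_eq.trans)
qed

lemma group_FVB: "group (FVB n)"
proof (rule groupI)
  fix x y assume "x \<in> carrier (FVB n)" "y \<in> carrier (FVB n)"
  then show "x \<otimes>\<^bsub>FVB n\<^esub> y \<in> carrier (FVB n)"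
    by (auto simp: carrier_FVB class_mult)
next
  show "\<one>\<^bsub>FVB n\<^esub> \<in> carrier (FVB n)" by (auto simp: carrier_FVB one_FVB)
next
  fix x y z assume "x \<in> carrier (FVB n)" "y \<in> carrier (FVB n)" "z \<in> carrier (FVB n)"
  then show "x \<otimes>\<^bsub>FVB n\<^esub> y \<otimes>\<^bsub>FVB n\<^esub> z = x \<otimes>\<^bsub>FVB n\<^esub> (y \<otimes>\<^bsub>FVB n\<^esub> z)"
    by (auto simp: carrier_FVB class_mult)
next
  fix x assume "x \<in> carrier (FVB n)"
  then show "\<one>\<^bsub>FVB n\<^esub> \<otimes>\<^bsub>FVB n\<^esub> x = x"
    by (auto simp: carrier_FVB class_mult one_FVB)
next
  fix x assume "x \<in> carrier (FVB n)"
  then obtain u where u: "u \<in> fvb_words n" "x = fvb_class n u" by (auto simp: carrier_FVB)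
  then have "fvb_class n (rev u) \<otimes>\<^bsub>FVB n\<^esub> x = \<one>\<^bsub>FVB n\<^esub>"
    using class_mult[of "rev u" n u] rev_cancel[OF u(1)] class_eq
    by (simp add: one_FVB fvb_words_def)
  moreover have "fvb_class n (rev u) \<in> carrier (FVB n)" using u
    by (auto simp: carrier_FVB fvb_words_def)
  ultimately show "\<exists>y\<in>carrier (FVB n). y \<otimes>\<^bsub>FVB n\<^esub> x = \<one>\<^bsub>FVB n\<^esub>" by blast
qed

lemma inv_class: "u \<in> fvb_words n \<Longrightarrow> inv\<^bsub>FVB n\<^esub> (fvb_class n u) = fvb_class n (rev u)"
proof -
  assume u: "u \<in> fvb_words n"
  interpret group "FVB n" by (rule group_FVB)
  have r: "rev u \<in> fvb_words n" using u by (auto simp: fvb_words_def)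
  show ?thesis
    by (rule inv_equality) (use u r rev_cancel[OF u] class_eq in \<open>auto simp: class_mult one_FVB carrier_FVB\<close>)
qed

definition trr :: "ab fword \<Rightarrow> fvb_gen list set \<Rightarrow> tr" where
  "trr w C = tw w (SOME u. u \<in> C)"

lemma trr_class: "u \<in> fvb_words n \<Longrightarrow> trr w (fvb_class n u) = tw w u"
proof -
  assume u: "u \<in> fvb_words n"
  have "u \<in> fvb_class n u" using u by (simp add: fvb_class_def fvb_eq.refl)
  then have "(SOME v. v \<in> fvb_class n u) \<in> fvb_class n u" by (rule someI)
  then show ?thesis unfolding trr_def fvb_class_def by (auto dest: eq_tw[where w=w] simp: fvb_class_def)
qed

lemma Theta_trr: "Theta w C = gm (trr w C)"
  by (simp add: Theta_def trr_def theta_word_gm)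

definition SupS :: "nat \<Rightarrow> ab fword \<Rightarrow> nat set \<Rightarrow> fvb_gen list set set" where
  "SupS n w S = {C \<in> carrier (FVB n). pure S (trr w C)}"

lemma trr_mult: "C \<in> carrier (FVB n) \<Longrightarrow> D \<in> carrier (FVB n) \<Longrightarrow>
   trr w (C \<otimes>\<^bsub>FVB n\<^esub> D) = tcomp (trr w C) (trr w D)"
  by (auto simp: carrier_FVB class_mult trr_class tw_append)

lemma trr_one: "trr w \<one>\<^bsub>FVB n\<^esub> = idt"
  by (simp add: one_FVB trr_class)

lemma valid_trr: "valid (trr w C)" by (simp add: trr_def)



lemma pureI: "(\<And>k. ta t k = k) \<Longrightarrow> (\<And>k. tb t k = k) \<Longrightarrow> (\<And>k. k \<notin> S \<Longrightarrow> tu t k = []) \<Longrightarrow> pure S t"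
  by (auto simp: pure_def fun_eq_iff)

lemma pure_tcomp: "pure S t \<Longrightarrow> pure S t' \<Longrightarrow> pure S (tcomp t t')"
  by (auto simp: pure_def tcomp_def)

lemma pure_idt: "pure S idt" by (simp add: pure_def idt_def)

lemma pure_inv: assumes ph: "pure S h" and v: "valid hi" and e: "tcomp h hi = idt" shows "pure S hi"
proof -
  have ab: "ta hi k = k \<and> tb hi k = k" for k
  proof -
    have "ta (tcomp h hi) k = ta idt k" "tb (tcomp h hi) k = tb idt k" using e by simp_all
    then show ?thesis using ph by (simp add: pure_def)
  qed
  then have tb: "tb hi = id" by (simp add: fun_eq_iff)
  show ?thesis
  proof (rule pureI)
    fix k
    show "ta hi k = k" "tb hi k = k" using ab by auto
    assume "k \<notin> S"
    then have z: "tu h k = []" using ph by (simp add: pure_def)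
    have "tu (tcomp h hi) k = tu idt k" using e by simp
    then have "fmul (tu hi k) [] = []" using ph tb z by (simp add: pure_def)
    then show "tu hi k = []" using v by (simp add: valid_def)
  qed
qed

lemma pure_comm:
  assumes ph: "pure S h" and pk: "pure T k" and v: "valid h" "valid hi" "valid k" "valid ki"
    and ih: "tcomp h hi = idt" and ik: "tcomp k ki = idt"
  shows "pure (S \<inter> T) (tcomp (tcomp (tcomp h k) hi) ki)"
proof -
  have phi: "pure S hi" by (rule pure_inv[OF ph v(2) ih])
  have pki: "pure T ki" by (rule pure_inv[OF pk v(4) ik])
  have r: "\<And>t j. valid t \<Longrightarrow> fg_reduce (tu t j) = tu t j" by (simp add: valid_def)
  have ch: "\<And>j. fmul (tu hi j) (tu h j) = []"
  proof -
    fix j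
    have "tu (tcomp h hi) j = tu idt j" using ih by simp
    then show "fmul (tu hi j) (tu h j) = []" using ph phi v by (simp add: pure_def r)
  qed
  have ck: "\<And>j. fmul (tu ki j) (tu k j) = []"
  proof -
    fix j
    have "tu (tcomp k ki) j = tu idt j" using ik by simp
    then show "fmul (tu ki j) (tu k j) = []" using pk pki v by (simp add: pure_def r)
  qed
  show ?thesis
  proof (rule pureI)
    fix j
    show "ta (tcomp (tcomp (tcomp h k) hi) ki) j = j" "tb (tcomp (tcomp (tcomp h k) hi) ki) j = j"
      using ph pk phi pki by (simp_all add: pure_def)
    assume j: "j \<notin> S \<inter> T"
    have eq: "tu (tcomp (tcomp (tcomp h k) hi) ki) j = fmul (tu ki j) (fmul (tu hi j) (fmul (tu k j) (tu h j)))"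
      using ph pk phi pki v by (simp add: pure_def r)
    show "tu (tcomp (tcomp (tcomp h k) hi) ki) j = []"
    proof (cases "j \<in> S")
      case False
      then have "tu h j = []" "tu hi j = []" using ph phi by (auto simp: pure_def)
      then show ?thesis using eq ck v by (simp add: r)
    next
      case True
      then have "j \<notin> T" using j by auto
      then have "tu k j = []" "tu ki j = []" using pk pki by (auto simp: pure_def)
      then show ?thesis using eq ch v by (simp add: r)
    qed
  qed
qed

lemma SupS_one: "\<one>\<^bsub>FVB n\<^esub> \<in> SupS n w S"
  using monoid.one_closed[OF group.is_monoid[OF group_FVB]] by (simp add: SupS_def trr_one pure_idt)

lemma SupS_mult: "C \<in> SupS n w S \<Longrightarrow> D \<in> SupS n w S \<Longrightarrow> C \<otimes>\<^bsub>FVB n\<^esub> D \<in> SupS n w S"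
  using monoid.m_closed[OF group.is_monoid[OF group_FVB]] by (auto simp: SupS_def trr_mult pure_tcomp)

lemma trr_inv: assumes c: "C \<in> carrier (FVB n)"
  shows "tcomp (trr w C) (trr w (inv\<^bsub>FVB n\<^esub> C)) = idt"
proof -
  have ic: "inv\<^bsub>FVB n\<^esub> C \<in> carrier (FVB n)" by (rule group.inv_closed[OF group_FVB c])
  have "tcomp (trr w C) (trr w (inv\<^bsub>FVB n\<^esub> C)) = trr w (C \<otimes>\<^bsub>FVB n\<^esub> inv\<^bsub>FVB n\<^esub> C)"
    by (rule trr_mult[OF c ic, symmetric])
  also have "C \<otimes>\<^bsub>FVB n\<^esub> inv\<^bsub>FVB n\<^esub> C = \<one>\<^bsub>FVB n\<^esub>" by (rule group.r_inv[OF group_FVB c])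
  finally show ?thesis by (simp only: trr_one)
qed

lemma SupS_inv: assumes "C \<in> SupS n w S" shows "inv\<^bsub>FVB n\<^esub> C \<in> SupS n w S"
proof -
  have c: "C \<in> carrier (FVB n)" and p: "pure S (trr w C)" using assms by (auto simp: SupS_def)
  have "inv\<^bsub>FVB n\<^esub> C \<in> carrier (FVB n)" by (rule group.inv_closed[OF group_FVB c])
  moreover have "pure S (trr w (inv\<^bsub>FVB n\<^esub> C))"
    by (rule pure_inv[OF p valid_trr trr_inv[OF c]])
  ultimately show ?thesis by (simp add: SupS_def)
qed

lemma generate_SupS: assumes Y: "Y \<subseteq> SupS n w S" shows "generate (FVB n) Y \<subseteq> SupS n w S"
proof
  fix x assume "x \<in> generate (FVB n) Y"
  then show "x \<in> SupS n w S"
  proof (induction rule: generate.induct)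
    case one then show ?case by (rule SupS_one)
  next
    case (incl h) then show ?case using Y by blast
  next
    case (inv h) then show ?case using Y SupS_inv by blast
  next
    case (eng h1 h2) then show ?case using SupS_mult by blast
  qed
qed

lemma comm_SupS: "H \<subseteq> SupS n w S \<Longrightarrow> K \<subseteq> SupS n w T \<Longrightarrow> comm_sub (FVB n) H K \<subseteq> SupS n w (S \<inter> T)"
  unfolding comm_sub_def
proof (rule generate_SupS, safe)
  fix h k assume H: "H \<subseteq> SupS n w S" and K: "K \<subseteq> SupS n w T" and h: "h \<in> H" and k: "k \<in> K"
  let ?G = "FVB n"
  have hc: "h \<in> carrier ?G" and kc: "k \<in> carrier ?G" using H K h k by (auto simp: SupS_def)
  have hic: "inv\<^bsub>?G\<^esub> h \<in> carrier ?G" and kic: "inv\<^bsub>?G\<^esub> k \<in> carrier ?G"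
    using hc kc group.inv_closed[OF group_FVB] by auto
  have c: "h \<otimes>\<^bsub>?G\<^esub> k \<otimes>\<^bsub>?G\<^esub> inv\<^bsub>?G\<^esub> h \<otimes>\<^bsub>?G\<^esub> inv\<^bsub>?G\<^esub> k \<in> carrier ?G"
    using hc kc hic kic monoid.m_closed[OF group.is_monoid[OF group_FVB]] by auto
  have "trr w (h \<otimes>\<^bsub>?G\<^esub> k \<otimes>\<^bsub>?G\<^esub> inv\<^bsub>?G\<^esub> h \<otimes>\<^bsub>?G\<^esub> inv\<^bsub>?G\<^esub> k)
       = tcomp (tcomp (tcomp (trr w h) (trr w k)) (trr w (inv\<^bsub>?G\<^esub> h))) (trr w (inv\<^bsub>?G\<^esub> k))"
    using hc kc hic kic monoid.m_closed[OF group.is_monoid[OF group_FVB]] by (simp add: trr_mult)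
  moreover have "pure (S \<inter> T) \<dots>"
    by (rule pure_comm) (use H K h k hc kc trr_inv valid_trr in \<open>auto simp: SupS_def\<close>)
  ultimately show "h \<otimes>\<^bsub>?G\<^esub> k \<otimes>\<^bsub>?G\<^esub> inv\<^bsub>?G\<^esub> h \<otimes>\<^bsub>?G\<^esub> inv\<^bsub>?G\<^esub> k \<in> SupS n w (S \<inter> T)"
    using c by (simp add: SupS_def)
qed

lemma SupS_ker: "SupS n w {} \<subseteq> Theta_ker n w"
proof
  fix C assume "C \<in> SupS n w {}"
  then have c: "C \<in> carrier (FVB n)" and p: "pure {} (trr w C)" by (auto simp: SupS_def)
  have "\<And>l. Theta w C l = [(True, l)]"
    using p by (case_tac l) (auto simp: Theta_trr pure_def)
  then show "C \<in> Theta_ker n w" using c by (simp add: Theta_ker_def)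
qed



lemma cls: "fvb_sigma n i = fvb_class n [Sig i]" "fvb_rho n i = fvb_class n [Rho i]"
  by (simp_all add: fvb_sigma_def fvb_rho_def)

context
  fixes n i :: nat and w :: "ab fword"
  assumes n3: "n \<ge> 3" and i1: "1 \<le> i" and i2: "i \<le> n - 2"
begin

lemma idx: "i \<le> n - 1" "Suc i \<le> n - 1" "i \<le> n - Suc 0" "Suc i \<le> n - Suc 0" "i + 1 \<le> n - 1"
  using n3 i1 i2 by auto

lemma wd: "[Rho i, Sig i] \<in> fvb_words n" "[Rho (i+1), Sig (i+1)] \<in> fvb_words n"
   "[Rho (i+1), Rho i, Sig i, Rho (i+1)] \<in> fvb_words n"
  using n3 i1 i2 by auto

lemma lam_ab: "fvb_lambda n i (i+1) = fvb_class n [Rho i, Sig i]"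
  using n3 i1 i2 idx by (simp add: cls class_mult)

lemma lam_bc: "fvb_lambda n (i+1) (i+2) = fvb_class n [Rho (i+1), Sig (i+1)]"
proof -
  have "i + 2 = Suc (i+1)" by simp
  then show ?thesis using n3 i1 i2 by (simp only: fvb_lambda.simps) (simp add: cls class_mult idx)
qed

lemma lam_ac: "fvb_lambda n i (i+2) = fvb_class n [Rho (i+1), Rho i, Sig i, Rho (i+1)]"
proof -
  have "i + 2 = Suc (Suc i)" by simp
  then show ?thesis using n3 i1 i2 by (simp only: fvb_lambda.simps) (simp add: cls class_mult idx)
qed

lemma gen_tab: "fvb_t n i (i+1) \<in> SupS n w {i, i+1}"
proof -
  have "fvb_t n i (i+1) = fvb_class n ([Rho i, Sig i] @ [Rho i, Sig i])"
    by (simp only: fvb_t_def lam_ab class_mult[OF wd(1) wd(1)])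
  moreover have "pure {i, i+1} (tw w ([Rho i, Sig i] @ [Rho i, Sig i]))" using t_ab by simp
  ultimately show ?thesis using wd by (simp add: SupS_def trr_class carrier_FVB)
qed

lemma gen_tbc: "fvb_t n (i+1) (i+2) \<in> SupS n w {i+1, i+2}"
proof -
  have "fvb_t n (i+1) (i+2) = fvb_class n ([Rho (i+1), Sig (i+1)] @ [Rho (i+1), Sig (i+1)])"
    by (simp only: fvb_t_def lam_bc class_mult[OF wd(2) wd(2)])
  moreover have "pure {i+1, i+2} (tw w ([Rho (i+1), Sig (i+1)] @ [Rho (i+1), Sig (i+1)]))" using t_bc by simp
  ultimately show ?thesis using wd by (simp add: SupS_def trr_class carrier_FVB)
qed

lemma gen_tac: "fvb_t n i (i+2) \<in> SupS n w {i, i+2}"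
proof -
  have "fvb_t n i (i+2) = fvb_class n ([Rho (i+1), Rho i, Sig i, Rho (i+1)] @ [Rho (i+1), Rho i, Sig i, Rho (i+1)])"
    by (simp only: fvb_t_def lam_ac class_mult[OF wd(3) wd(3)])
  moreover have "pure {i, i+2} (tw w ([Rho (i+1), Rho i, Sig i, Rho (i+1)] @ [Rho (i+1), Rho i, Sig i, Rho (i+1)]))" using t_ac by simp
  ultimately show ?thesis using wd by (simp add: SupS_def trr_class carrier_FVB)
qed

lemma gen_d: "fvb_d n i (i+1) (i+2) \<in> SupS n w {i+1, i+2}"
proof -
  let ?u = "rev [Rho (i+1), Sig (i+1)] @ rev [Rho i, Sig i] @ [Rho (i+1), Sig (i+1)] @ [Rho (i+1), Rho i, Sig i, Rho (i+1)]"
  have u: "?u \<in> fvb_words n" using wd by (simp add: fvb_words_def)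
  have "fvb_d n i (i+1) (i+2) = fvb_class n ?u"
    using wd u unfolding fvb_d_def lam_ab lam_bc lam_ac
    by (simp add: inv_class class_mult fvb_words_def del: rev.simps)
  moreover have "pure {i+1, i+2} (tw w ?u)" by (rule d_bc)
  ultimately show ?thesis using u by (simp add: SupS_def trr_class carrier_FVB)
qed

lemma gen_e: "fvb_e n i (i+1) (i+2) \<in> SupS n w {i, i+1}"
proof -
  let ?u = "rev [Rho (i+1), Sig (i+1)] @ rev [Rho i, Sig i] @ [Rho (i+1), Rho i, Sig i, Rho (i+1)] @ [Rho i, Sig i]"
  have u: "?u \<in> fvb_words n" using wd by (simp add: fvb_words_def)
  have "fvb_e n i (i+1) (i+2) = fvb_class n ?u"
    using wd u unfolding fvb_e_def lam_ab lam_bc lam_ac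
    by (simp add: inv_class class_mult fvb_words_def del: rev.simps)
  moreover have "pure {i, i+1} (tw w ?u)" by (rule e_ab)
  ultimately show ?thesis using u by (simp add: SupS_def trr_class carrier_FVB)
qed

end

theorem lemma4p1:
  fixes n i :: nat and w :: "ab fword"
  assumes "n \<ge> 3" and "1 \<le> i" and "i \<le> n - 2"
  shows "comm_sub (FVB n)
           (generate (FVB n) {fvb_t n i (i+1), fvb_e n i (i+1) (i+2)})
           (comm_sub (FVB n)
              (generate (FVB n) {fvb_t n (i+1) (i+2), fvb_d n i (i+1) (i+2)})
              (generate (FVB n) {fvb_t n i (i+2)}))
         \<subseteq> Theta_ker n w"
proof -
  have Q: "generate (FVB n) {fvb_t n i (i+1), fvb_e n i (i+1) (i+2)} \<subseteq> SupS n w {i, i+1}"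
    by (rule generate_SupS) (use gen_tab gen_e assms in auto)
  have M: "generate (FVB n) {fvb_t n (i+1) (i+2), fvb_d n i (i+1) (i+2)} \<subseteq> SupS n w {i+1, i+2}"
    by (rule generate_SupS) (use gen_tbc gen_d assms in auto)
  have P: "generate (FVB n) {fvb_t n i (i+2)} \<subseteq> SupS n w {i, i+2}"
    by (rule generate_SupS) (use gen_tac assms in auto)
  have "comm_sub (FVB n)
           (generate (FVB n) {fvb_t n i (i+1), fvb_e n i (i+1) (i+2)})
           (comm_sub (FVB n)
              (generate (FVB n) {fvb_t n (i+1) (i+2), fvb_d n i (i+1) (i+2)})
              (generate (FVB n) {fvb_t n i (i+2)})) \<subseteq> SupS n w ({i, i+1} \<inter> ({i+1, i+2} \<inter> {i, i+2}))"
    by (rule comm_SupS[OF Q comm_SupS[OF M P]])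
  also have "{i, i+1} \<inter> ({i+1, i+2} \<inter> {i, i+2}) = {}" by auto
  finally show ?thesis using SupS_ker by blast
qed


end
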